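(* Let $(G,P)$ be an instance of Edge Disjoint Paths in which every vertex occurs in at most one pair of $P$. Let $X\subseteq E(G)$ be a feedback edge set of $G$ and let $Y$ be the set of vertices incident to at least one edge of $X$. Let $L$ be a connected component of $G-Y$ such that there is exactly one edge $\{\ell,y\}$ of $G$ with $\ell\in V(L)$ and $y\in Y$. Then: (a) if $L$ contains no unmatched terminal and $(L,P_L)$ is a YES-instance of EDP, then $(G,P)$ is a YES-instance if and only if $(G-V(L),\,P\setminus P_L)$ is a YES-instance; (b) if $L$ contains exactly one unmatched terminal $s$ (with $\{s,t\}\in P$, $t\notin V(L)$) and $(L,P_L\cup\{\{s,\ell\}\})$ is a YES-instance of EDP (where the pair $\{s,\ell\}$ is omitted if $s=\ell$), then $(G,P)$ is a YES-instance if and only if $(G',P\setminus P_L)$ is a YES-instance, where $G'$ is obtained from $G-V(L)$ by adding the vertex $s$ and the edge $\{y,s\}$; (c) in all other cases (i.e., $L$ contains at least two unmatched terminals, or $L$ contains no unmatched terminal and $(L,P_L)$ is a NO-instance, or $L$ contains exactly one unmatched terminal $s$ and $(L,P_L\cup\{\{s,\ell\}\})$ is a NO-instance), $(G,P)$ is a NO-instance.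
   Context: Edge Disjoint Paths (EDP): given an undirected graph $G$ and a set $P$ of terminal pairs (2-element subsets of $V(G)$), decide whether there exist pairwise edge-disjoint paths in $G$, one for each pair $\{s,t\}\in P$, connecting $s$ and $t$. A feedback edge set of $G$ is a set $X\subseteq E(G)$ such that $G-X$ is a forest. For a subgraph $H$ of $G$, $P_H\subseteq P$ is the set of pairs with both endpoints in $V(H)$, and $H$ contains an unmatched terminal $s$ if $\{s,t\}\in P$ with $s\in V(H)$ and $t\notin V(H)$. *)

theory Defs
  imports Main
begin

definition graph :: "'a set \<Rightarrow> 'a set set \<Rightarrow> bool" where
  "graph V E \<longleftrightarrow> finite V \<and> (\<forall>e\<in>E. \<exists>u v. u \<noteq> v \<and> u \<in> V \<and> v \<in> V \<and> e = {u, v})"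

definition pairs_ok :: "'a set \<Rightarrow> 'a set set \<Rightarrow> bool" where
  "pairs_ok V P \<longleftrightarrow> (\<forall>p\<in>P. \<exists>u v. u \<noteq> v \<and> u \<in> V \<and> v \<in> V \<and> p = {u, v})"

definition is_path :: "'a set \<Rightarrow> 'a set set \<Rightarrow> 'a list \<Rightarrow> bool" where
  "is_path V E xs \<longleftrightarrow> xs \<noteq> [] \<and> distinct xs \<and> set xs \<subseteq> V \<and>
     (\<forall>i. Suc i < length xs \<longrightarrow> {xs ! i, xs ! Suc i} \<in> E)"

definition path_edges :: "'a list \<Rightarrow> 'a set set" where
  "path_edges xs = {{xs ! i, xs ! Suc i} | i. Suc i < length xs}"

definition edp :: "'a set \<Rightarrow> 'a set set \<Rightarrow> 'a set set \<Rightarrow> bool" where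
  "edp V E P \<longleftrightarrow> (\<exists>f :: 'a set \<Rightarrow> 'a list.
      (\<forall>p\<in>P. is_path V E (f p) \<and> {hd (f p), last (f p)} = p) \<and>
      (\<forall>p\<in>P. \<forall>q\<in>P. p \<noteq> q \<longrightarrow> path_edges (f p) \<inter> path_edges (f q) = {}))"

definition forest :: "'a set \<Rightarrow> 'a set set \<Rightarrow> bool" where
  "forest V E \<longleftrightarrow> \<not> (\<exists>cs. 3 \<le> length cs \<and> is_path V E cs \<and> {last cs, hd cs} \<in> E)"

definition feedback_edge_set :: "'a set \<Rightarrow> 'a set set \<Rightarrow> 'a set set \<Rightarrow> bool" where
  "feedback_edge_set V E X \<longleftrightarrow> X \<subseteq> E \<and> forest V (E - X)"

definition induced_edges :: "'a set set \<Rightarrow> 'a set \<Rightarrow> 'a set set" where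
  "induced_edges E S = {e \<in> E. e \<subseteq> S}"

definition is_component :: "'a set \<Rightarrow> 'a set set \<Rightarrow> 'a set \<Rightarrow> bool" where
  "is_component V E C \<longleftrightarrow>
     (\<exists>c\<in>V. C = {v. \<exists>xs. is_path V E xs \<and> hd xs = c \<and> last xs = v})"

definition inner_pairs :: "'a set set \<Rightarrow> 'a set \<Rightarrow> 'a set set" where
  "inner_pairs P S = {p \<in> P. p \<subseteq> S}"

definition unmatched :: "'a set set \<Rightarrow> 'a set \<Rightarrow> 'a set" where
  "unmatched P S = {s \<in> S. \<exists>t. {s, t} \<in> P \<and> t \<notin> S}"

end

theory Submission
  imports Defs
begin


lemma path_edges_Nil[simp]: "path_edges [] = {}"
  by (simp add: path_edges_def)
lemma path_edges_single[simp]: "path_edges [x] = {}"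
  by (simp add: path_edges_def)
lemma path_edges_CC[simp]: "path_edges (x # y # zs) = insert {x, y} (path_edges (y # zs))"
proof (rule set_eqI)
  fix e
  show "e \<in> path_edges (x # y # zs) \<longleftrightarrow> e \<in> insert {x, y} (path_edges (y # zs))"
  proof
    assume "e \<in> path_edges (x # y # zs)"
    then obtain i where i: "Suc i < length (x#y#zs)" "e = {(x#y#zs) ! i, (x#y#zs) ! Suc i}"
      unfolding path_edges_def by blast
    show "e \<in> insert {x, y} (path_edges (y # zs))"
    proof (cases i)
      case 0 then show ?thesis using i by simp
    next
      case (Suc j) then show ?thesis using i unfolding path_edges_def by auto
    qed
  next
    assume "e \<in> insert {x, y} (path_edges (y # zs))"
    then show "e \<in> path_edges (x # y # zs)"
    proof
      assume "e = {x,y}" then show ?thesis unfolding path_edges_def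
        by (rule_tac CollectI, rule_tac x=0 in exI) auto
    next
      assume "e \<in> path_edges (y # zs)"
      then obtain i where i: "Suc i < length (y#zs)" "e = {(y#zs) ! i, (y#zs) ! Suc i}"
        unfolding path_edges_def by blast
      then show ?thesis unfolding path_edges_def
        by (rule_tac CollectI, rule_tac x="Suc i" in exI) auto
    qed
  qed
qed

lemma path_edges_Cons: "zs \<noteq> [] \<Longrightarrow> path_edges (x # zs) = insert {x, hd zs} (path_edges zs)"
  by (cases zs) auto

lemma is_path_alt: "is_path V E xs \<longleftrightarrow> xs \<noteq> [] \<and> distinct xs \<and> set xs \<subseteq> V \<and> path_edges xs \<subseteq> E"
  unfolding is_path_def path_edges_def by blast

lemma path_edges_append:
  "ys \<noteq> [] \<Longrightarrow> zs \<noteq> [] \<Longrightarrow> path_edges (ys @ zs) = path_edges ys \<union> path_edges zs \<union> {{last ys, hd zs}}"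
proof (induction ys)
  case Nil then show ?case by simp
next
  case (Cons a ys)
  show ?case
  proof (cases "ys = []")
    case True then show ?thesis using Cons.prems by (cases zs) auto
  next
    case False
    then have "path_edges (a # ys @ zs) = insert {a, hd ys} (path_edges (ys @ zs))"
      by (simp add: path_edges_Cons)
    then show ?thesis using Cons False by (auto simp: path_edges_Cons)
  qed
qed

lemma path_edges_subset_set: "e \<in> path_edges xs \<Longrightarrow> e \<subseteq> set xs"
  unfolding path_edges_def by auto

lemma path_edges_rev[simp]: "path_edges (rev xs) = path_edges xs"
proof (induction xs)
  case Nil then show ?case by simp
next
  case (Cons a xs)
  show ?case
  proof (cases "xs = []")
    case True then show ?thesis by simp
  next
    case False
    then have "path_edges (rev xs @ [a]) = path_edges (rev xs) \<union> path_edges [a] \<union> {{last (rev xs), hd [a]}}"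
      by (intro path_edges_append) auto
    then show ?thesis using Cons False by (auto simp: path_edges_Cons last_rev insert_commute)
  qed
qed

lemma is_path_rev: "is_path V E xs \<Longrightarrow> is_path V E (rev xs)"
  by (simp add: is_path_alt)

lemma is_path_mono: "is_path V E xs \<Longrightarrow> V \<subseteq> V' \<Longrightarrow> E \<subseteq> E' \<Longrightarrow> is_path V' E' xs"
  by (auto simp: is_path_alt)

lemma orient:
  assumes "is_path V E xs" "{hd xs, last xs} = {u, v}"
  obtains xs' where "is_path V E xs'" "hd xs' = u" "last xs' = v" "path_edges xs' = path_edges xs"
proof (cases "hd xs = u")
  case True
  then have "last xs = v" using assms(2) by (auto simp: doubleton_eq_iff)
  then show ?thesis using that[of xs] assms True by auto
next
  case False
  then have "hd xs = v" "last xs = u" using assms(2) by (auto simp: doubleton_eq_iff)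
  moreover have "xs \<noteq> []" using assms(1) by (simp add: is_path_def)
  ultimately show ?thesis using that[of "rev xs"] assms is_path_rev by (auto simp: hd_rev last_rev)
qed

lemma stay_out:
  assumes "xs \<noteq> []" "hd xs \<notin> A" "\<forall>e\<in>path_edges xs. e \<subseteq> A \<or> e \<inter> A = {}"
  shows "set xs \<inter> A = {}"
  using assms
proof (induction xs)
  case Nil then show ?case by simp
next
  case (Cons a xs)
  show ?case
  proof (cases "xs = []")
    case True then show ?thesis using Cons by simp
  next
    case False
    have e: "{a, hd xs} \<in> path_edges (a # xs)" using False by (simp add: path_edges_Cons)
    then have "hd xs \<notin> A" using Cons.prems by auto
    moreover have "\<forall>e\<in>path_edges xs. e \<subseteq> A \<or> e \<inter> A = {}" using Cons.prems False by (simp add: path_edges_Cons)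
    ultimately have "set xs \<inter> A = {}" using Cons.IH False by blast
    then show ?thesis using Cons.prems by simp
  qed
qed

lemma decomp:
  assumes "distinct xs" "xs \<noteq> []" "hd xs \<in> A" "a \<in> A" "b \<notin> A"
    and cr: "\<forall>e\<in>path_edges xs. e \<subseteq> A \<or> e \<inter> A = {} \<or> e = {a, b}"
  shows "set xs \<subseteq> A \<or> (\<exists>ys zs. xs = ys @ zs \<and> ys \<noteq> [] \<and> zs \<noteq> [] \<and> set ys \<subseteq> A \<and>
            set zs \<inter> A = {} \<and> last ys = a \<and> hd zs = b)"
proof (cases "dropWhile (\<lambda>v. v \<in> A) xs = []")
  case True
  then have "set xs \<subseteq> A" by (auto simp: dropWhile_eq_Nil_conv)
  then show ?thesis by blast
next
  case False
  define ys where "ys = takeWhile (\<lambda>v. v \<in> A) xs"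
  define zs where "zs = dropWhile (\<lambda>v. v \<in> A) xs"
  have xs: "xs = ys @ zs" by (simp add: ys_def zs_def)
  have zsne: "zs \<noteq> []" using False zs_def by simp
  have hz: "hd zs \<notin> A" using zsne unfolding zs_def using hd_dropWhile by blast
  have ysne: "ys \<noteq> []" using assms(2,3) unfolding ys_def by (cases xs) auto
  have ysA: "set ys \<subseteq> A" unfolding ys_def by (meson set_takeWhileD subsetI)
  have ly: "last ys \<in> A" using ysne ysA by auto
  have pe: "path_edges xs = path_edges ys \<union> path_edges zs \<union> {{last ys, hd zs}}"
    using xs ysne zsne path_edges_append by metis
  have "{last ys, hd zs} = {a, b}" using cr pe ly hz by auto
  then have la: "last ys = a" and hb: "hd zs = b" using ly hz assms(4,5) by (auto simp: doubleton_eq_iff)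
  have anz: "a \<notin> set zs" using assms(1) xs la ysne
    by (metis disjoint_iff distinct_append last_in_set)
  have "\<forall>e\<in>path_edges zs. e \<subseteq> A \<or> e \<inter> A = {}"
  proof
    fix e assume e: "e \<in> path_edges zs"
    then have "e \<noteq> {a,b}" using anz path_edges_subset_set by fastforce
    then show "e \<subseteq> A \<or> e \<inter> A = {}" using cr pe e by auto
  qed
  then have "set zs \<inter> A = {}" using stay_out zsne hz by blast
  then show ?thesis using xs ysne zsne ysA la hb by blast
qed




lemma is_path_prefix: "is_path V E (as @ bs) \<Longrightarrow> as \<noteq> [] \<Longrightarrow> is_path V E as"
  by (cases "bs = []") (auto simp: is_path_alt path_edges_append)

lemma is_path_suffix: "is_path V E (as @ bs) \<Longrightarrow> bs \<noteq> [] \<Longrightarrow> is_path V E bs"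
  by (cases "as = []") (auto simp: is_path_alt path_edges_append)

lemma is_path_restrict: "is_path V E xs \<Longrightarrow> set xs \<subseteq> A \<Longrightarrow> is_path A (induced_edges E A) xs"
  unfolding is_path_alt induced_edges_def using path_edges_subset_set by fastforce

lemma path_edges_induced: "is_path A (induced_edges E A) xs \<Longrightarrow> e \<in> path_edges xs \<Longrightarrow> e \<in> E \<and> e \<subseteq> A"
  unfolding is_path_alt induced_edges_def by auto

locale edpsetup =
  fixes V :: "'a set" and E P :: "'a set set" and C :: "'a set" and l y :: 'a
  assumes edges: "\<forall>e\<in>E. \<exists>u v. u \<noteq> v \<and> u \<in> V \<and> v \<in> V \<and> e = {u, v}"
    and CV: "C \<subseteq> V" and lC: "l \<in> C" and yV: "y \<in> V" and yC: "y \<notin> C" and lyE: "{l, y} \<in> E"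
    and cross: "\<forall>e\<in>E. e \<subseteq> C \<or> e \<inter> C = {} \<or> e = {l, y}"
    and PP: "\<forall>p\<in>P. \<exists>u v. u \<noteq> v \<and> u \<in> V \<and> v \<in> V \<and> p = {u, v}"
    and disj: "\<forall>p\<in>P. \<forall>q\<in>P. p \<noteq> q \<longrightarrow> p \<inter> q = {}"
begin

lemma cross_edges: "is_path V E xs \<Longrightarrow> \<forall>e\<in>path_edges xs. e \<subseteq> C \<or> e \<inter> C = {} \<or> e = {l, y}"
  using cross by (auto simp: is_path_alt)

lemma path_in:
  assumes "is_path V E xs" "hd xs \<in> C" "last xs \<in> C"
  shows "is_path C (induced_edges E C) xs"
proof -
  have d: "distinct xs" "xs \<noteq> []" using assms(1) by (auto simp: is_path_def)
  have "set xs \<subseteq> C"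
  proof -
    note D = decomp[OF d assms(2) lC yC cross_edges[OF assms(1)]]
    { fix ys zs assume "xs = ys @ zs" "zs \<noteq> []" "set zs \<inter> C = {}"
      then have "last xs \<in> set zs" by simp
      then have False using assms(3) \<open>set zs \<inter> C = {}\<close> by blast }
    then show ?thesis using D by blast
  qed
  then show ?thesis using is_path_restrict[OF assms(1)] by blast
qed

lemma path_out:
  assumes "is_path V E xs" "hd xs \<notin> C" "last xs \<notin> C"
  shows "is_path (V - C) (induced_edges E (V - C)) xs"
proof -
  have d: "distinct xs" "xs \<noteq> []" using assms(1) by (auto simp: is_path_def)
  have cr: "\<forall>e\<in>path_edges xs. e \<subseteq> -C \<or> e \<inter> -C = {} \<or> e = {y, l}"
    using cross_edges[OF assms(1)] by (auto simp: insert_commute)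
  have "set xs \<subseteq> -C"
  proof -
    have "hd xs \<in> -C" "y \<in> -C" "l \<notin> -C" using assms(2) yC lC by auto
    note D = decomp[OF d this cr]
    { fix ys zs assume "xs = ys @ zs" "zs \<noteq> []" "set zs \<inter> -C = {}"
      then have "last xs \<in> set zs" by simp
      then have False using assms(3) \<open>set zs \<inter> -C = {}\<close> by blast }
    then show ?thesis using D by blast
  qed
  moreover have "set xs \<subseteq> V" using assms(1) by (simp add: is_path_def)
  ultimately have "set xs \<subseteq> V - C" by blast
  then show ?thesis using is_path_restrict[OF assms(1)] by blast
qed

lemma path_cross:
  assumes "is_path V E xs" "{hd xs, last xs} = {s, t}" "s \<in> C" "t \<notin> C"
  obtains ys zs where "is_path C (induced_edges E C) ys" "is_path (V - C) (induced_edges E (V - C)) zs"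
    "hd ys = s" "last ys = l" "hd zs = y" "last zs = t"
    "path_edges ys \<subseteq> path_edges xs" "path_edges zs \<subseteq> path_edges xs" "{l, y} \<in> path_edges xs"
proof -
  obtain xs' where x': "is_path V E xs'" "hd xs' = s" "last xs' = t" "path_edges xs' = path_edges xs"
    by (rule orient[OF assms(1,2)])
  have d: "distinct xs'" "xs' \<noteq> []" using x'(1) by (auto simp: is_path_def)
  have "\<not> set xs' \<subseteq> C" using x' d assms(4) by (metis last_in_set subsetD)
  then obtain ys zs where yz: "xs' = ys @ zs" "ys \<noteq> []" "zs \<noteq> []" "set ys \<subseteq> C"
    "set zs \<inter> C = {}" "last ys = l" "hd zs = y"
    using decomp[OF d _ lC yC cross_edges[OF x'(1)]] x'(2) assms(3) by blast
  have pe: "path_edges xs' = path_edges ys \<union> path_edges zs \<union> {{l, y}}"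
    using path_edges_append yz by metis
  have py: "is_path V E ys" using is_path_prefix x'(1) yz by blast
  have pz: "is_path V E zs" using is_path_suffix x'(1) yz by blast
  have "set zs \<subseteq> V - C" using pz yz by (auto simp: is_path_def)
  show ?thesis
  proof (rule that[of ys zs])
    show "is_path C (induced_edges E C) ys" using is_path_restrict[OF py yz(4)] .
    show "is_path (V - C) (induced_edges E (V - C)) zs" using is_path_restrict[OF pz] \<open>set zs \<subseteq> V - C\<close> .
    show "hd ys = s" using yz x'(2) by simp
    show "last zs = t" using yz x'(3) by simp
  qed (use yz x' pe in auto)
qed

end




context edpsetup begin

lemma unm: "s \<in> unmatched P C \<Longrightarrow> s \<in> C \<and> (\<exists>t. {s, t} \<in> P \<and> t \<notin> C)"
  unfolding unmatched_def by blast

lemma classify: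
  assumes "p \<in> P" "p \<notin> inner_pairs P C"
  shows "p \<inter> C = {} \<or> (\<exists>s t. p = {s, t} \<and> s \<in> unmatched P C \<and> t \<notin> C)"
proof -
  obtain u v where uv: "u \<noteq> v" "p = {u, v}" using PP assms(1) by blast
  have nc: "\<not> p \<subseteq> C" using assms unfolding inner_pairs_def by blast
  show ?thesis
  proof (cases "u \<in> C")
    case True
    then have "v \<notin> C" using nc uv by auto
    then have "u \<in> unmatched P C" using True uv assms(1) unfolding unmatched_def by blast
    then show ?thesis using uv \<open>v \<notin> C\<close> by blast
  next
    case False
    show ?thesis
    proof (cases "v \<in> C")
      case True
      have pv: "p = {v, u}" using uv by blast
      then have "v \<in> unmatched P C" using True \<open>u \<notin> C\<close> assms(1) unfolding unmatched_def
        by blast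
      then show ?thesis using pv \<open>u \<notin> C\<close> by blast
    next
      case False
      then show ?thesis using \<open>u \<notin> C\<close> uv by auto
    qed
  qed
qed

lemma edpE:
  assumes "edp V' E' Q"
  obtains f where "\<And>p. p \<in> Q \<Longrightarrow> is_path V' E' (f p)" "\<And>p. p \<in> Q \<Longrightarrow> {hd (f p), last (f p)} = p"
    "\<And>p q. p \<in> Q \<Longrightarrow> q \<in> Q \<Longrightarrow> p \<noteq> q \<Longrightarrow> path_edges (f p) \<inter> path_edges (f q) = {}"
proof -
  obtain f where H: "(\<forall>p\<in>Q. is_path V' E' (f p) \<and> {hd (f p), last (f p)} = p)"
      "(\<forall>p\<in>Q. \<forall>q\<in>Q. p \<noteq> q \<longrightarrow> path_edges (f p) \<inter> path_edges (f q) = {})"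
    using assms unfolding edp_def by (elim exE conjE)
  show ?thesis
  proof (rule that[of f])
    fix p assume "p \<in> Q" then show "is_path V' E' (f p)" "{hd (f p), last (f p)} = p" using H(1) by simp_all
  next
    fix p q assume "p \<in> Q" "q \<in> Q" "p \<noteq> q" then show "path_edges (f p) \<inter> path_edges (f q) = {}" using H(2) by simp
  qed
qed

lemma edpI:
  assumes "\<And>p. p \<in> Q \<Longrightarrow> is_path V' E' (f p)" "\<And>p. p \<in> Q \<Longrightarrow> {hd (f p), last (f p)} = p"
    "\<And>p q. p \<in> Q \<Longrightarrow> q \<in> Q \<Longrightarrow> p \<noteq> q \<Longrightarrow> path_edges (f p) \<inter> path_edges (f q) = {}"
  shows "edp V' E' Q"
  unfolding edp_def by (rule exI[of _ f]) (use assms in simp)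

lemma R1:
  assumes "edp V E P"
  shows "edp C (induced_edges E C) (inner_pairs P C)"
proof -
  obtain f where f: "\<And>p. p \<in> P \<Longrightarrow> is_path V E (f p)" "\<And>p. p \<in> P \<Longrightarrow> {hd (f p), last (f p)} = p"
    "\<And>p q. p \<in> P \<Longrightarrow> q \<in> P \<Longrightarrow> p \<noteq> q \<Longrightarrow> path_edges (f p) \<inter> path_edges (f q) = {}"
    by (rule edpE[OF assms], rule that, assumption+)
  show ?thesis
  proof (rule edpI[where f=f])
    fix p assume p: "p \<in> inner_pairs P C"
    then have "p \<in> P" "p \<subseteq> C" unfolding inner_pairs_def by auto
    then have "hd (f p) \<in> C" "last (f p) \<in> C" using f(2)[of p] by auto
    then show "is_path C (induced_edges E C) (f p)" using path_in f(1) \<open>p \<in> P\<close> by blast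
    show "{hd (f p), last (f p)} = p" using f(2) \<open>p \<in> P\<close> .
  next
    fix p q assume "p \<in> inner_pairs P C" "q \<in> inner_pairs P C" "p \<noteq> q"
    then show "path_edges (f p) \<inter> path_edges (f q) = {}" using f(3) unfolding inner_pairs_def by blast
  qed
qed

lemma R2:
  assumes "unmatched P C = {}" "edp V E P"
  shows "edp (V - C) (induced_edges E (V - C)) (P - inner_pairs P C)"
proof -
  obtain f where f: "\<And>p. p \<in> P \<Longrightarrow> is_path V E (f p)" "\<And>p. p \<in> P \<Longrightarrow> {hd (f p), last (f p)} = p"
    "\<And>p q. p \<in> P \<Longrightarrow> q \<in> P \<Longrightarrow> p \<noteq> q \<Longrightarrow> path_edges (f p) \<inter> path_edges (f q) = {}"
    by (rule edpE[OF assms(2)], rule that, assumption+)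
  show ?thesis
  proof (rule edpI[where f=f])
    fix p assume p: "p \<in> P - inner_pairs P C"
    then have "p \<inter> C = {}" using classify[of p] assms(1) p by auto
    then have "hd (f p) \<notin> C" "last (f p) \<notin> C" using f(2)[of p] p by auto
    then show "is_path (V - C) (induced_edges E (V - C)) (f p)" using path_out f(1) p by blast
    show "{hd (f p), last (f p)} = p" using f(2) p by blast
  next
    fix p q assume "p \<in> P - inner_pairs P C" "q \<in> P - inner_pairs P C" "p \<noteq> q"
    then show "path_edges (f p) \<inter> path_edges (f q) = {}" using f(3) by blast
  qed
qed

lemma R3:
  assumes "a \<in> unmatched P C" "b \<in> unmatched P C" "a \<noteq> b"
  shows "\<not> edp V E P"
proof
  assume e: "edp V E P"
  obtain f where f: "\<And>p. p \<in> P \<Longrightarrow> is_path V E (f p)" "\<And>p. p \<in> P \<Longrightarrow> {hd (f p), last (f p)} = p"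
    "\<And>p q. p \<in> P \<Longrightarrow> q \<in> P \<Longrightarrow> p \<noteq> q \<Longrightarrow> path_edges (f p) \<inter> path_edges (f q) = {}"
    by (rule edpE[OF e], rule that, assumption+)
  obtain ta where a: "a \<in> C" "{a, ta} \<in> P" "ta \<notin> C" using unm[OF assms(1)] by blast
  obtain tb where b: "b \<in> C" "{b, tb} \<in> P" "tb \<notin> C" using unm[OF assms(2)] by blast
  have ne: "{a, ta} \<noteq> {b, tb}"
  proof
    assume "{a, ta} = {b, tb}"
    then have "a \<in> {b, tb}" by blast
    then show False using a b assms(3) by blast
  qed
  have "{l, y} \<in> path_edges (f {a, ta})"
    by (rule path_cross[OF f(1)[OF a(2)] f(2)[OF a(2)] a(1) a(3)])
  moreover have "{l, y} \<in> path_edges (f {b, tb})"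
    by (rule path_cross[OF f(1)[OF b(2)] f(2)[OF b(2)] b(1) b(3)])
  ultimately show False using f(3)[OF a(2) b(2) ne] by blast
qed

end



context edpsetup begin

lemma E_ne: "e \<in> E \<Longrightarrow> e \<noteq> {}"
  using edges by blast

lemma EC_EO: "induced_edges E C \<inter> induced_edges E (V - C) = {}"
  unfolding induced_edges_def using E_ne by blast

lemma ly_notEC: "{l, y} \<notin> induced_edges E C"
  unfolding induced_edges_def using yC by simp

lemma ly_notEO: "{l, y} \<notin> induced_edges E (V - C)"
  unfolding induced_edges_def using lC by simp

lemma induced_sub: "induced_edges E A \<subseteq> E"
  unfolding induced_edges_def by blast

lemma sl_notin:
  assumes "{s, t} \<in> P" "s \<in> C" "t \<notin> C" "s \<noteq> l"
  shows "{s, l} \<notin> P"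
proof
  assume sl: "{s, l} \<in> P"
  have "{s, l} \<noteq> {s, t}"
  proof
    assume "{s, l} = {s, t}"
    then have "t \<in> {s, l}" by (metis insertI1 insert_commute)
    then show False using assms lC by auto
  qed
  then have "{s, l} \<inter> {s, t} = {}" using disj[rule_format, OF sl assms(1)] by simp
  then show False by simp
qed

lemma other_disjoint:
  assumes U: "unmatched P C = {s}" and st: "{s, t} \<in> P" and q: "q \<in> P" "q \<notin> inner_pairs P C" "q \<noteq> {s, t}"
  shows "q \<inter> C = {}"
proof -
  have F: False if "q = {s', t'}" "s' \<in> unmatched P C" for s' t'
  proof -
    have "s' = s" using U that(2) by simp
    then have "s \<in> q \<inter> {s, t}" using that(1) by simp
    moreover have "q \<inter> {s, t} = {}" using disj[rule_format, OF q(1) st q(3)] .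
    ultimately show False by simp
  qed
  from classify[OF q(1,2)] show ?thesis
  proof
    assume "\<exists>s t. q = {s, t} \<and> s \<in> unmatched P C \<and> t \<notin> C"
    then obtain s' t' where "q = {s', t'}" "s' \<in> unmatched P C" by blast
    then show ?thesis using F by blast
  qed
qed

lemma R4:
  assumes U: "unmatched P C = {s}" and e: "edp V E P"
  shows "edp C (induced_edges E C) (inner_pairs P C \<union> (if s = l then {} else {{s, l}}))"
proof (cases "s = l")
  case True then show ?thesis using R1[OF e] by simp
next
  case False
  obtain f where f: "\<And>p. p \<in> P \<Longrightarrow> is_path V E (f p)" "\<And>p. p \<in> P \<Longrightarrow> {hd (f p), last (f p)} = p"
    "\<And>p q. p \<in> P \<Longrightarrow> q \<in> P \<Longrightarrow> p \<noteq> q \<Longrightarrow> path_edges (f p) \<inter> path_edges (f q) = {}"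
    by (rule edpE[OF e], rule that, assumption+)
  obtain t where st: "s \<in> C" "{s, t} \<in> P" "t \<notin> C" using unm U by blast
  obtain ys zs where yz: "is_path C (induced_edges E C) ys" "hd ys = s" "last ys = l"
     "path_edges ys \<subseteq> path_edges (f {s, t})"
    by (rule path_cross[OF f(1)[OF st(2)] f(2)[OF st(2)] st(1) st(3)])
  have slP: "{s, l} \<notin> P" using sl_notin st False by blast
  define g where "g q = (if q = {s, l} then ys else f q)" for q
  have inner: "is_path C (induced_edges E C) (f p)" "{hd (f p), last (f p)} = p"
    if "p \<in> inner_pairs P C" for p
  proof -
    have "p \<in> P" "p \<subseteq> C" using that unfolding inner_pairs_def by auto
    then have "hd (f p) \<in> C" "last (f p) \<in> C" using f(2)[of p] by auto
    then show "is_path C (induced_edges E C) (f p)" using path_in f(1) \<open>p \<in> P\<close> by blast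
    show "{hd (f p), last (f p)} = p" using f(2) \<open>p \<in> P\<close> .
  qed
  have dis: "path_edges ys \<inter> path_edges (f q) = {}" if "q \<in> inner_pairs P C" for q
  proof -
    have "q \<in> P" "q \<subseteq> C" using that unfolding inner_pairs_def by auto
    then have "q \<noteq> {s, t}" using st(3) by blast
    then show ?thesis using f(3)[OF st(2) \<open>q \<in> P\<close>] yz(4) by blast
  qed
  have gne: "g p = f p" if "p \<in> inner_pairs P C" for p
    using that slP unfolding g_def inner_pairs_def by auto
  have gsl: "g {s, l} = ys" unfolding g_def by simp
  show ?thesis
  proof (rule edpI[where f=g])
    fix p assume p: "p \<in> inner_pairs P C \<union> (if s = l then {} else {{s, l}})"
    then have "p \<in> inner_pairs P C \<or> p = {s, l}" using False by auto
    then have "is_path C (induced_edges E C) (g p) \<and> {hd (g p), last (g p)} = p"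
    proof
      assume "p \<in> inner_pairs P C"
      then show ?thesis using inner gne by simp
    next
      assume "p = {s, l}"
      then show ?thesis using gsl yz by simp
    qed
    then show "is_path C (induced_edges E C) (g p)" "{hd (g p), last (g p)} = p" by simp_all
  next
    fix p q assume pq: "p \<in> inner_pairs P C \<union> (if s = l then {} else {{s, l}})"
      "q \<in> inner_pairs P C \<union> (if s = l then {} else {{s, l}})" "p \<noteq> q"
    then have p: "p \<in> inner_pairs P C \<or> p = {s, l}" and q: "q \<in> inner_pairs P C \<or> q = {s, l}"
      using False by auto
    show "path_edges (g p) \<inter> path_edges (g q) = {}"
    proof (cases "p = {s, l}")
      case True
      then have "q \<in> inner_pairs P C" using q pq(3) by blast
      then show ?thesis using True gne gsl dis by auto
    next
      case pF: False
      then have pi: "p \<in> inner_pairs P C" using p by blast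
      show ?thesis
      proof (cases "q = {s, l}")
        case True
        then show ?thesis using pi gne gsl dis by auto
      next
        case False
        then have "q \<in> inner_pairs P C" using q by blast
        then show ?thesis using pi gne f(3) pq(3) unfolding inner_pairs_def by auto
      qed
    qed
  qed
qed

lemma R5:
  assumes U: "unmatched P C = {s}" and e: "edp V E P"
  shows "edp ((V - C) \<union> {s}) (induced_edges E (V - C) \<union> {{y, s}}) (P - inner_pairs P C)"
proof -
  obtain f where f: "\<And>p. p \<in> P \<Longrightarrow> is_path V E (f p)" "\<And>p. p \<in> P \<Longrightarrow> {hd (f p), last (f p)} = p"
    "\<And>p q. p \<in> P \<Longrightarrow> q \<in> P \<Longrightarrow> p \<noteq> q \<Longrightarrow> path_edges (f p) \<inter> path_edges (f q) = {}"
    by (rule edpE[OF e], rule that, assumption+)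
  obtain t where st: "s \<in> C" "{s, t} \<in> P" "t \<notin> C" using unm U by blast
  obtain ys zs where yz: "is_path (V - C) (induced_edges E (V - C)) zs" "hd zs = y" "last zs = t"
     "path_edges zs \<subseteq> path_edges (f {s, t})"
    by (rule path_cross[OF f(1)[OF st(2)] f(2)[OF st(2)] st(1) st(3)])
  define g where "g q = (if q = {s, t} then s # zs else f q)" for q
  have zsne: "zs \<noteq> []" using yz(1) by (simp add: is_path_def)
  have zsC: "set zs \<subseteq> V - C" using yz(1) by (simp add: is_path_def)
  have pe: "path_edges (s # zs) = insert {y, s} (path_edges zs)"
    using zsne yz(2) by (simp add: path_edges_Cons insert_commute)
  have d: "distinct (s # zs)" using yz(1) zsC st(1) by (auto simp: is_path_def)
  have sv: "set (s # zs) \<subseteq> (V - C) \<union> {s}" using zsC by auto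
  have pes: "path_edges (s # zs) \<subseteq> induced_edges E (V - C) \<union> {{y, s}}"
    using pe yz(1) by (auto simp: is_path_alt)
  have npath: "is_path ((V - C) \<union> {s}) (induced_edges E (V - C) \<union> {{y, s}}) (s # zs)"
    using d sv pes by (simp add: is_path_alt)
  have nends: "{hd (s # zs), last (s # zs)} = {s, t}" using zsne yz(3) by simp
  have oth: "q \<inter> C = {}" if "q \<in> P - inner_pairs P C" "q \<noteq> {s, t}" for q
  proof -
    have "q \<in> P" "q \<notin> inner_pairs P C" using that(1) by simp_all
    then show ?thesis using other_disjoint[OF U st(2) _ _ that(2)] by simp
  qed
  have othpath: "is_path (V - C) (induced_edges E (V - C)) (f q)" if "q \<in> P - inner_pairs P C" "q \<noteq> {s, t}" for q
  proof -
    have qP: "q \<in> P" using that(1) by simp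
    have "hd (f q) \<in> q" "last (f q) \<in> q" using f(2)[OF qP] by (metis insertI1, metis insertI1 insertI2)
    then have "hd (f q) \<notin> C" "last (f q) \<notin> C" using oth[OF that] by auto
    then show ?thesis using path_out[OF f(1)[OF qP]] by simp
  qed
  have othys: "{y, s} \<notin> path_edges (f q)" if "q \<in> P - inner_pairs P C" "q \<noteq> {s, t}" for q
  proof
    assume "{y, s} \<in> path_edges (f q)"
    then have "{y, s} \<subseteq> V - C" using path_edges_induced[OF othpath[OF that]] by presburger
    then show False using st(1) by simp
  qed
  show ?thesis
  proof (rule edpI[where f=g])
    fix p assume p: "p \<in> P - inner_pairs P C"
    show "is_path ((V - C) \<union> {s}) (induced_edges E (V - C) \<union> {{y, s}}) (g p)"
    proof (cases "p = {s, t}")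
      case True then show ?thesis using npath unfolding g_def by simp
    next
      case False
      have "g p = f p" using False unfolding g_def by simp
      then show ?thesis using is_path_mono[OF othpath[OF p False] Un_upper1[of _ "{s}"] Un_upper1[of _ "{{y, s}}"]]
        by (simp only:)
    qed
    show "{hd (g p), last (g p)} = p"
    proof (cases "p = {s, t}")
      case True then show ?thesis using nends unfolding g_def by simp
    next
      case False then show ?thesis using f(2) p unfolding g_def by simp
    qed
  next
    fix p q assume pq: "p \<in> P - inner_pairs P C" "q \<in> P - inner_pairs P C" "p \<noteq> q"
    show "path_edges (g p) \<inter> path_edges (g q) = {}"
    proof (cases "p = {s, t}")
      case True
      then have "q \<noteq> {s, t}" using pq(3) by blast
      have qP: "q \<in> P" using pq(2) by simp
      have "path_edges (f {s, t}) \<inter> path_edges (f q) = {}" using f(3)[OF st(2) qP] \<open>q \<noteq> {s, t}\<close> by metis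
      then have "path_edges zs \<inter> path_edges (f q) = {}" using yz(4) by blast
      then show ?thesis using True othys[OF pq(2) \<open>q \<noteq> {s, t}\<close>] pe \<open>q \<noteq> {s, t}\<close> unfolding g_def by simp
    next
      case pF: False
      show ?thesis
      proof (cases "q = {s, t}")
        case True
        have pP: "p \<in> P" using pq(1) by simp
        have "path_edges (f {s, t}) \<inter> path_edges (f p) = {}" using f(3)[OF st(2) pP] pF by metis
        then have "path_edges zs \<inter> path_edges (f p) = {}" using yz(4) by blast
        then show ?thesis using True othys[OF pq(1) pF] pe pF unfolding g_def by (simp add: Int_commute)
      next
        case False
        then show ?thesis using pF f(3)[of p q] pq unfolding g_def by simp
      qed
    qed
  qed
qed

lemma RA:
  assumes eL: "edp C (induced_edges E C) (inner_pairs P C)"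
    and eO: "edp (V - C) (induced_edges E (V - C)) (P - inner_pairs P C)"
  shows "edp V E P"
proof -
  obtain fL where fL: "\<And>p. p \<in> inner_pairs P C \<Longrightarrow> is_path C (induced_edges E C) (fL p)"
    "\<And>p. p \<in> inner_pairs P C \<Longrightarrow> {hd (fL p), last (fL p)} = p"
    "\<And>p q. p \<in> inner_pairs P C \<Longrightarrow> q \<in> inner_pairs P C \<Longrightarrow> p \<noteq> q \<Longrightarrow> path_edges (fL p) \<inter> path_edges (fL q) = {}"
    by (rule edpE[OF eL], rule that, assumption+)
  obtain fO where fO: "\<And>p. p \<in> P - inner_pairs P C \<Longrightarrow> is_path (V - C) (induced_edges E (V - C)) (fO p)"
    "\<And>p. p \<in> P - inner_pairs P C \<Longrightarrow> {hd (fO p), last (fO p)} = p"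
    "\<And>p q. p \<in> P - inner_pairs P C \<Longrightarrow> q \<in> P - inner_pairs P C \<Longrightarrow> p \<noteq> q \<Longrightarrow> path_edges (fO p) \<inter> path_edges (fO q) = {}"
    by (rule edpE[OF eO], rule that, assumption+)
  define g where "g q = (if q \<in> inner_pairs P C then fL q else fO q)" for q
  have mix: "path_edges (fL p) \<inter> path_edges (fO q) = {}"
    if "p \<in> inner_pairs P C" "q \<in> P - inner_pairs P C" for p q
  proof -
    have "path_edges (fL p) \<subseteq> induced_edges E C" using fL(1)[OF that(1)] by (simp add: is_path_alt)
    moreover have "path_edges (fO q) \<subseteq> induced_edges E (V - C)" using fO(1)[OF that(2)] by (simp add: is_path_alt)
    ultimately show ?thesis using EC_EO by blast
  qed
  show ?thesis
  proof (rule edpI[where f=g])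
    fix p assume p: "p \<in> P"
    show "is_path V E (g p)"
    proof (cases "p \<in> inner_pairs P C")
      case True then show ?thesis using fL(1)[OF True] is_path_mono[OF _ CV induced_sub] unfolding g_def by simp
    next
      case False
      have "is_path (V - C) (induced_edges E (V - C)) (fO p)" using fO(1) p False by simp
      then show ?thesis using is_path_mono[OF _ Diff_subset induced_sub] False unfolding g_def by simp
    qed
    show "{hd (g p), last (g p)} = p" using fL(2) fO(2) p unfolding g_def by auto
  next
    fix p q assume pq: "p \<in> P" "q \<in> P" "p \<noteq> q"
    show "path_edges (g p) \<inter> path_edges (g q) = {}"
      using fL(3)[of p q] fO(3)[of p q] mix[of p q] mix[of q p] pq unfolding g_def by auto
  qed
qed

end



lemma disj3: "A \<subseteq> X \<Longrightarrow> B \<inter> A = {} \<Longrightarrow> Z \<subseteq> Y \<Longrightarrow> X \<inter> Y = {} \<Longrightarrow> e \<notin> X \<Longrightarrow> A \<inter> (B \<union> Z \<union> {e}) = {}"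
  by blast

lemma disj3': "A \<subseteq> Y \<Longrightarrow> A \<inter> Z = {} \<Longrightarrow> B \<subseteq> X \<Longrightarrow> X \<inter> Y = {} \<Longrightarrow> e \<notin> Y \<Longrightarrow> (B \<union> Z \<union> {e}) \<inter> A = {}"
  by blast

context edpsetup begin

lemma RB:
  assumes U: "unmatched P C = {s}"
    and eL: "edp C (induced_edges E C) (inner_pairs P C \<union> (if s = l then {} else {{s, l}}))"
    and eO: "edp ((V - C) \<union> {s}) (induced_edges E (V - C) \<union> {{y, s}}) (P - inner_pairs P C)"
  shows "edp V E P"
proof -
  define PL where "PL = inner_pairs P C \<union> (if s = l then {} else {{s, l}})"
  define V' where "V' = (V - C) \<union> {s}"
  define E' where "E' = induced_edges E (V - C) \<union> {{y, s}}"
  define EC where "EC = induced_edges E C"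
  define EO where "EO = induced_edges E (V - C)"
  define PO where "PO = P - inner_pairs P C"
  obtain fL where fL: "\<And>p. p \<in> PL \<Longrightarrow> is_path C EC (fL p)"
    "\<And>p. p \<in> PL \<Longrightarrow> {hd (fL p), last (fL p)} = p"
    "\<And>p q. p \<in> PL \<Longrightarrow> q \<in> PL \<Longrightarrow> p \<noteq> q \<Longrightarrow> path_edges (fL p) \<inter> path_edges (fL q) = {}"
    by (rule edpE[OF eL[folded PL_def EC_def]], rule that, assumption+)
  obtain fO where fO: "\<And>p. p \<in> PO \<Longrightarrow> is_path V' E' (fO p)"
    "\<And>p. p \<in> PO \<Longrightarrow> {hd (fO p), last (fO p)} = p"
    "\<And>p q. p \<in> PO \<Longrightarrow> q \<in> PO \<Longrightarrow> p \<noteq> q \<Longrightarrow> path_edges (fO p) \<inter> path_edges (fO q) = {}"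
    by (rule edpE[OF eO[folded V'_def E'_def EO_def PO_def]], rule that, assumption+)
  obtain t where st: "s \<in> C" "{s, t} \<in> P" "t \<notin> C" using unm U by blast
  define ps where "ps = {s, t}"
  have psPO: "ps \<in> PO" using st unfolding ps_def PO_def inner_pairs_def by auto
  have sneq: "s \<noteq> t" using st by auto
  have psends: "{hd (fO ps), last (fO ps)} = {s, t}" using fO(2)[OF psPO] unfolding ps_def .
  obtain xs where xs: "is_path V' E' xs" "hd xs = s" "last xs = t" "path_edges xs = path_edges (fO ps)"
    by (rule orient[OF fO(1)[OF psPO] psends])
  have xsne: "xs \<noteq> []" using xs(1) by (simp add: is_path_def)
  define zs where "zs = tl xs"
  have xsc: "xs = s # zs" using xsne xs(2) unfolding zs_def by (cases xs) auto
  have zsne: "zs \<noteq> []" using xsc xs(3) sneq by auto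
  have dxs: "distinct (s # zs)" using xs(1) xsc by (simp add: is_path_def)
  have snz: "s \<notin> set zs" using dxs by simp
  have setxs: "set (s # zs) \<subseteq> V'" using xs(1) xsc by (simp add: is_path_def)
  have zsC: "set zs \<subseteq> V - C" using setxs snz unfolding V'_def by auto
  have pexs: "path_edges (s # zs) = insert {s, hd zs} (path_edges zs)" using zsne by (simp add: path_edges_Cons)
  have pexsE: "path_edges (s # zs) \<subseteq> E'" using xs(1) xsc by (simp add: is_path_alt)
  have EOsub: "e \<subseteq> V - C" if "e \<in> EO" for e using that unfolding EO_def induced_edges_def by simp
  have EOE: "EO \<subseteq> E" unfolding EO_def induced_edges_def by auto
  have ECE: "EC \<subseteq> E" unfolding EC_def induced_edges_def by auto
  have ECsub: "e \<subseteq> C" if "e \<in> EC" for e using that unfolding EC_def induced_edges_def by simp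
  have "{s, hd zs} \<in> E'" using pexs pexsE by simp
  moreover have "{s, hd zs} \<notin> EO" using EOsub st(1) by blast
  ultimately have "{s, hd zs} = {y, s}" unfolding E'_def EO_def by simp
  then have hz: "hd zs = y" using yC st(1) by (metis doubleton_eq_iff)
  have zsEO: "path_edges zs \<subseteq> EO"
  proof
    fix e assume e: "e \<in> path_edges zs"
    then have "e \<in> E'" using pexs pexsE by blast
    moreover have "s \<notin> e" using path_edges_subset_set[OF e] snz by blast
    ultimately show "e \<in> EO" unfolding E'_def EO_def by auto
  qed
  have "{s, hd zs} \<in> path_edges (fO ps)" using xs(4) xsc pexs by (metis insertI1)
  then have ysfO: "{y, s} \<in> path_edges (fO ps)" using hz by (metis insert_commute)
  have zsfO: "path_edges zs \<subseteq> path_edges (fO ps)" using xs(4) xsc pexs by blast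
  have lastzs: "last zs = t" using xs(3) xsc zsne by simp
  
  have slnP: "s \<noteq> l \<Longrightarrow> {s, l} \<notin> inner_pairs P C" using sl_notin[OF st(2) st(1) st(3)] unfolding inner_pairs_def by blast
  obtain ys where ys: "is_path C EC ys" "hd ys = s" "last ys = l"
    "\<And>p. p \<in> inner_pairs P C \<Longrightarrow> path_edges ys \<inter> path_edges (fL p) = {}"
  proof (cases "s = l")
    case True
    show ?thesis
    proof (rule that[of "[s]"])
      show "is_path C EC [s]" using st(1) by (simp add: is_path_def)
    qed (use True in simp_all)
  next
    case False
    have slPL: "{s, l} \<in> PL" using False unfolding PL_def by simp
    obtain ys where "is_path C EC ys" "hd ys = s" "last ys = l" "path_edges ys = path_edges (fL {s, l})"
      by (rule orient[OF fL(1)[OF slPL] fL(2)[OF slPL]])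
    moreover have "path_edges (fL {s, l}) \<inter> path_edges (fL p) = {}" if "p \<in> inner_pairs P C" for p
    proof -
      have "p \<in> PL" "p \<noteq> {s, l}" using that slnP[OF False] unfolding PL_def by auto
      then show ?thesis using fL(3)[OF slPL] by metis
    qed
    ultimately show ?thesis using that by simp
  qed
  have ysne: "ys \<noteq> []" using ys(1) by (simp add: is_path_def)
  have ysC: "set ys \<subseteq> C" using ys(1) by (simp add: is_path_def)
  have ysEC: "path_edges ys \<subseteq> EC" using ys(1) by (simp add: is_path_alt)
  define np where "np = ys @ zs"
  have penp: "path_edges np = path_edges ys \<union> path_edges zs \<union> {{l, y}}"
    unfolding np_def using path_edges_append[OF ysne zsne] ys(3) hz by simp
  have dzs: "distinct zs" using dxs by simp
  have dnp: "distinct np" unfolding np_def using ys(1) dzs ysC zsC by (auto simp: is_path_def)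
  have snp: "set np \<subseteq> V" unfolding np_def using ysC zsC CV by auto
  have npE: "path_edges np \<subseteq> E" using penp ysEC zsEO ECE EOE lyE by blast
  have nppath: "is_path V E np" using dnp snp npE ysne unfolding np_def by (simp add: is_path_alt)
  have npends: "{hd np, last np} = ps" unfolding np_def ps_def using ysne zsne ys(2) lastzs by simp
  
  define OT where "OT = PO - {ps}"
  have otE: "path_edges (fO q) \<subseteq> EO" if "q \<in> OT" for q
  proof
    fix e assume e: "e \<in> path_edges (fO q)"
    have qPO: "q \<in> PO" "q \<noteq> ps" using that unfolding OT_def by auto
    have "e \<in> E'" using fO(1)[OF qPO(1)] e by (auto simp: is_path_alt)
    moreover have "e \<noteq> {y, s}"
      using fO(3)[OF qPO(1) psPO qPO(2)] ysfO e by blast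
    ultimately show "e \<in> EO" unfolding E'_def EO_def by simp
  qed
  have otpath: "is_path V E (fO q)" if "q \<in> OT" for q
  proof -
    have qPO: "q \<in> PO" using that unfolding OT_def by auto
    have "set (fO q) \<subseteq> V'" using fO(1)[OF qPO] by (simp add: is_path_def)
    then have "set (fO q) \<subseteq> V" unfolding V'_def using st(1) CV by auto
    then show ?thesis using fO(1)[OF qPO] otE[OF that] EOE by (auto simp: is_path_alt)
  qed
  have otzs: "path_edges (fO q) \<inter> path_edges zs = {}" if "q \<in> OT" for q
  proof -
    have qPO: "q \<in> PO" "q \<noteq> ps" using that unfolding OT_def by auto
    then show ?thesis using fO(3)[OF qPO(1) psPO qPO(2)] zsfO by blast
  qed
  have PLE: "path_edges (fL p) \<subseteq> EC" if "p \<in> inner_pairs P C" for p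
    using fL(1)[of p] that unfolding PL_def by (simp add: is_path_alt)
  have ECEO: "EC \<inter> EO = {}" using EC_EO unfolding EC_def EO_def .
  have lyEC: "{l, y} \<notin> EC" using ly_notEC unfolding EC_def .
  have lyEO: "{l, y} \<notin> EO" using ly_notEO unfolding EO_def .
  define g where "g q = (if q \<in> inner_pairs P C then fL q else if q = ps then np else fO q)" for q
  have cases3: "q \<in> inner_pairs P C \<or> q = ps \<or> q \<in> OT" if "q \<in> P" for q
    using that unfolding OT_def PO_def by blast
  have psnot: "ps \<notin> inner_pairs P C" using psPO unfolding PO_def by simp
  have OTnot: "q \<notin> inner_pairs P C \<and> q \<noteq> ps" if "q \<in> OT" for q using that unfolding OT_def PO_def by simp
  have gL: "g q = fL q" if "q \<in> inner_pairs P C" for q using that unfolding g_def by simp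
  have gps: "g ps = np" using psnot unfolding g_def by simp
  have gO: "g q = fO q" if "q \<in> OT" for q using OTnot[OF that] unfolding g_def by simp
  have Lpath: "is_path V E (fL q) \<and> {hd (fL q), last (fL q)} = q" if "q \<in> inner_pairs P C" for q
  proof -
    have "q \<in> PL" using that unfolding PL_def by simp
    then show ?thesis using is_path_mono[OF fL(1) CV ECE] fL(2) by blast
  qed
  have Opath: "is_path V E (fO q) \<and> {hd (fO q), last (fO q)} = q" if "q \<in> OT" for q
    using otpath[OF that] fO(2)[of q] that unfolding OT_def by simp
  
  have D1: "path_edges (g p) \<inter> path_edges (g q) = {}"
    if "p \<in> inner_pairs P C" "q \<in> inner_pairs P C" "p \<noteq> q" for p q
  proof -
    have "p \<in> PL" "q \<in> PL" using that unfolding PL_def by auto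
    then show ?thesis using fL(3) that(3) gL that(1,2) by metis
  qed
  have D2: "path_edges (g p) \<inter> path_edges (g ps) = {}" if "p \<in> inner_pairs P C" for p
  proof -
    have "path_edges (fL p) \<inter> (path_edges ys \<union> path_edges zs \<union> {{l, y}}) = {}"
      using disj3[OF PLE[OF that] _ zsEO ECEO lyEC] ys(4)[OF that] by (simp add: Int_commute)
    then show ?thesis using gL[OF that] gps penp by simp
  qed
  have D3: "path_edges (g p) \<inter> path_edges (g q) = {}" if "p \<in> inner_pairs P C" "q \<in> OT" for p q
  proof -
    have "path_edges (fL p) \<inter> path_edges (fO q) = {}" using PLE[OF that(1)] otE[OF that(2)] ECEO by blast
    then show ?thesis using gL[OF that(1)] gO[OF that(2)] by simp
  qed
  have D5: "path_edges (g ps) \<inter> path_edges (g q) = {}" if "q \<in> OT" for q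
  proof -
    have "(path_edges ys \<union> path_edges zs \<union> {{l, y}}) \<inter> path_edges (fO q) = {}"
      using disj3'[OF otE[OF that] _ ysEC ECEO lyEO] otzs[OF that] by (simp add: Int_commute)
    then show ?thesis using gO[OF that] gps penp by simp
  qed
  have D4: "path_edges (g p) \<inter> path_edges (g q) = {}" if "p \<in> OT" "q \<in> OT" "p \<noteq> q" for p q
    using gO[OF that(1)] gO[OF that(2)] fO(3)[of p q] that unfolding OT_def by simp
  show ?thesis
  proof (rule edpI[where f=g])
    fix p assume p: "p \<in> P"
    have "is_path V E (g p) \<and> {hd (g p), last (g p)} = p"
      using cases3[OF p]
    proof (elim disjE)
      assume "p \<in> inner_pairs P C" then show ?thesis using Lpath gL by simp
    next
      assume "p = ps" then show ?thesis using gps nppath npends by simp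
    next
      assume "p \<in> OT" then show ?thesis using Opath gO by simp
    qed
    then show "is_path V E (g p)" "{hd (g p), last (g p)} = p" by simp_all
  next
    fix p q assume pq: "p \<in> P" "q \<in> P" "p \<noteq> q"
    show "path_edges (g p) \<inter> path_edges (g q) = {}"
      using cases3[OF pq(1)]
    proof (elim disjE)
      assume p: "p \<in> inner_pairs P C"
      show ?thesis using cases3[OF pq(2)]
      proof (elim disjE)
        assume "q \<in> inner_pairs P C" then show ?thesis using D1 p pq(3) by simp
      next
        assume "q = ps" then show ?thesis using D2 p by simp
      next
        assume "q \<in> OT" then show ?thesis using D3 p by simp
      qed
    next
      assume p: "p = ps"
      show ?thesis using cases3[OF pq(2)]
      proof (elim disjE)
        assume "q \<in> inner_pairs P C" then show ?thesis using D2[of q] p by (simp add: Int_commute)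
      next
        assume "q = ps" then show ?thesis using p pq(3) by simp
      next
        assume "q \<in> OT" then show ?thesis using D5 p by simp
      qed
    next
      assume p: "p \<in> OT"
      show ?thesis using cases3[OF pq(2)]
      proof (elim disjE)
        assume "q \<in> inner_pairs P C" then show ?thesis using D3[of q p] p by (simp add: Int_commute)
      next
        assume "q = ps" then show ?thesis using D5[of p] p by (simp add: Int_commute)
      next
        assume "q \<in> OT" then show ?thesis using D4 p pq(3) by simp
      qed
    qed
  qed
qed

end



lemma comp_closed:
  assumes comp: "is_component W F C" and u: "u \<in> C" and e: "{u, v} \<in> F" and v: "v \<in> W"
  shows "v \<in> C"
proof -
  obtain c where c: "c \<in> W" "C = {v. \<exists>xs. is_path W F xs \<and> hd xs = c \<and> last xs = v}"
    using comp unfolding is_component_def by blast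
  obtain xs where xs: "is_path W F xs" "hd xs = c" "last xs = u" using u c(2) by blast
  have xsne: "xs \<noteq> []" using xs(1) by (simp add: is_path_def)
  show ?thesis
  proof (cases "v \<in> set xs")
    case True
    then obtain as bs where ab: "xs = as @ v # bs" by (metis split_list)
    have p: "is_path W F (as @ [v])" using is_path_prefix[of W F "as @ [v]" bs] xs(1) ab by simp
    have "hd (as @ [v]) = c" using xs(2) ab by (cases as) auto
    then show ?thesis using p c(2) by auto
  next
    case False
    have pe: "path_edges (xs @ [v]) = path_edges xs \<union> {{u, v}}"
      using path_edges_append[OF xsne, of "[v]"] xs(3) by simp
    have "is_path W F (xs @ [v])" using xs(1) False v pe e by (auto simp: is_path_alt)
    moreover have "hd (xs @ [v]) = c" using xs(2) xsne by simp
    ultimately show ?thesis using c(2) by auto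
  qed
qed

theorem mainTheorem8:
  fixes V :: "'a set" and E P X :: "'a set set" and C :: "'a set" and l y :: 'a
  assumes G: "graph V E"
    and PP: "pairs_ok V P"
    and disj: "\<forall>p\<in>P. \<forall>q\<in>P. p \<noteq> q \<longrightarrow> p \<inter> q = {}"
    and FES: "feedback_edge_set V E X"
    and Ydef: "Y = \<Union> X"
    and comp: "is_component (V - Y) (induced_edges E (V - Y)) C"
    and lC: "l \<in> C" and yY: "y \<in> Y"
    and unique_edge: "{e \<in> E. \<exists>a\<in>C. \<exists>b\<in>Y. e = {a, b}} = {{l, y}}"
  shows
    "(unmatched P C = {} \<and> edp C (induced_edges E C) (inner_pairs P C) \<longrightarrow>
        (edp V E P \<longleftrightarrow> edp (V - C) (induced_edges E (V - C)) (P - inner_pairs P C)))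
   \<and> (\<forall>s. unmatched P C = {s} \<and>
        edp C (induced_edges E C) (inner_pairs P C \<union> (if s = l then {} else {{s, l}})) \<longrightarrow>
        (edp V E P \<longleftrightarrow>
           edp ((V - C) \<union> {s}) (induced_edges E (V - C) \<union> {{y, s}}) (P - inner_pairs P C)))
   \<and> (((\<exists>a b. a \<in> unmatched P C \<and> b \<in> unmatched P C \<and> a \<noteq> b)
        \<or> (unmatched P C = {} \<and> \<not> edp C (induced_edges E C) (inner_pairs P C))
        \<or> (\<exists>s. unmatched P C = {s} \<and>
             \<not> edp C (induced_edges E C) (inner_pairs P C \<union> (if s = l then {} else {{s, l}}))))
       \<longrightarrow> \<not> edp V E P)"
proof -
  have edges: "\<forall>e\<in>E. \<exists>u v. u \<noteq> v \<and> u \<in> V \<and> v \<in> V \<and> e = {u, v}"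
    using G unfolding graph_def by blast
  have PP': "\<forall>p\<in>P. \<exists>u v. u \<noteq> v \<and> u \<in> V \<and> v \<in> V \<and> p = {u, v}"
    using PP unfolding pairs_ok_def by blast
  obtain c where c: "c \<in> V - Y"
    "C = {v. \<exists>xs. is_path (V - Y) (induced_edges E (V - Y)) xs \<and> hd xs = c \<and> last xs = v}"
    using comp unfolding is_component_def by blast
  have CVY: "C \<subseteq> V - Y"
  proof
    fix v assume "v \<in> C"
    then obtain xs where xs: "is_path (V - Y) (induced_edges E (V - Y)) xs" "last xs = v" using c(2) by blast
    then have "xs \<noteq> []" "set xs \<subseteq> V - Y" by (simp_all add: is_path_def)
    then show "v \<in> V - Y" using xs(2) by (metis last_in_set subsetD)
  qed
  have "{l, y} \<in> {e \<in> E. \<exists>a\<in>C. \<exists>b\<in>Y. e = {a, b}}" using unique_edge by simp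
  then have lyE: "{l, y} \<in> E" by simp
  obtain u0 v0 where uv0: "u0 \<in> V" "v0 \<in> V" "{l, y} = {u0, v0}" using edges lyE by meson
  have "y \<in> {u0, v0}" using uv0(3) by (metis insertI1 insertI2 insert_commute)
  then have yV: "y \<in> V" using uv0 by auto
  have yC: "y \<notin> C" using CVY yY by auto
  have CV: "C \<subseteq> V" using CVY by auto
  have crossuv: "{u, v} = {l, y}" if "{u, v} \<in> E" "u \<in> C" "v \<notin> C" "v \<in> V" for u v
  proof (cases "v \<in> Y")
    case True
    then have "{u, v} \<in> {e \<in> E. \<exists>a\<in>C. \<exists>b\<in>Y. e = {a, b}}" using that by blast
    then show ?thesis using unique_edge by simp
  next
    case False
    have "{u, v} \<in> induced_edges E (V - Y)" using that False CVY unfolding induced_edges_def by auto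
    then have "v \<in> C" using comp_closed[OF comp that(2)] that(4) False by blast
    then show ?thesis using that(3) by simp
  qed
  have cross: "\<forall>e\<in>E. e \<subseteq> C \<or> e \<inter> C = {} \<or> e = {l, y}"
  proof
    fix e assume eE: "e \<in> E"
    then obtain u v where uv: "u \<in> V" "v \<in> V" "e = {u, v}" using edges by meson
    show "e \<subseteq> C \<or> e \<inter> C = {} \<or> e = {l, y}"
    proof (cases "u \<in> C")
      case True
      show ?thesis
      proof (cases "v \<in> C")
        case True then show ?thesis using \<open>u \<in> C\<close> uv by simp
      next
        case False then show ?thesis using crossuv[of u v] eE uv True by simp
      qed
    next
      case False
      show ?thesis
      proof (cases "v \<in> C")
        case True
        have "{v, u} \<in> E" using eE uv by (simp add: insert_commute)
        then have "{v, u} = {l, y}" using crossuv[of v u] True False uv by simp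
        then show ?thesis using uv by (simp add: insert_commute)
      next
        case vF: False then show ?thesis using False uv by simp
      qed
    qed
  qed
  interpret S: edpsetup V E P C l y
    by (rule edpsetup.intro[OF edges CV lC yV yC lyE cross PP' disj])
  show ?thesis
  proof (intro conjI allI impI)
    assume a: "unmatched P C = {} \<and> edp C (induced_edges E C) (inner_pairs P C)"
    show "edp V E P \<longleftrightarrow> edp (V - C) (induced_edges E (V - C)) (P - inner_pairs P C)"
    proof
      assume "edp V E P" then show "edp (V - C) (induced_edges E (V - C)) (P - inner_pairs P C)"
        using S.R2 a by simp
    next
      assume "edp (V - C) (induced_edges E (V - C)) (P - inner_pairs P C)"
      then show "edp V E P" using S.RA a by simp
    qed
  next
    fix s
    assume a: "unmatched P C = {s} \<and>
        edp C (induced_edges E C) (inner_pairs P C \<union> (if s = l then {} else {{s, l}}))"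
    show "edp V E P \<longleftrightarrow>
           edp ((V - C) \<union> {s}) (induced_edges E (V - C) \<union> {{y, s}}) (P - inner_pairs P C)"
    proof
      assume "edp V E P" then show "edp ((V - C) \<union> {s}) (induced_edges E (V - C) \<union> {{y, s}}) (P - inner_pairs P C)"
        using S.R5 a by simp
    next
      assume "edp ((V - C) \<union> {s}) (induced_edges E (V - C) \<union> {{y, s}}) (P - inner_pairs P C)"
      then show "edp V E P" using S.RB a by simp
    qed
  next
    assume a: "(\<exists>a b. a \<in> unmatched P C \<and> b \<in> unmatched P C \<and> a \<noteq> b)
        \<or> (unmatched P C = {} \<and> \<not> edp C (induced_edges E C) (inner_pairs P C))
        \<or> (\<exists>s. unmatched P C = {s} \<and>
             \<not> edp C (induced_edges E C) (inner_pairs P C \<union> (if s = l then {} else {{s, l}})))"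
    then show "\<not> edp V E P"
    proof (elim disjE exE conjE)
      fix a b assume "a \<in> unmatched P C" "b \<in> unmatched P C" "a \<noteq> b"
      then show ?thesis by (rule S.R3)
    next
      assume "\<not> edp C (induced_edges E C) (inner_pairs P C)"
      then show ?thesis using S.R1 by auto
    next
      fix s assume "unmatched P C = {s}"
        "\<not> edp C (induced_edges E C) (inner_pairs P C \<union> (if s = l then {} else {{s, l}}))"
      then show ?thesis using S.R4 by auto
    qed
  qed
qed


end
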